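(* Assume $\sum_{i=1}^M b_i<1$ and let $\mathbf r^\star(\epsilon)$ be the energy-scarce solution. Then $\lim_{\epsilon\to0^+}|\bar\Delta(\mathbf r^\star(\epsilon))-\bar\Delta_{\mathrm{opt}}(\epsilon)|=0$, and $$\lim_{\epsilon\to0^+}\bar\Delta_{\mathrm{opt}}(\epsilon)=\sum_{i=1}^M\Big[\frac{w_i}{b_i}+w_i\Big].$$
   Context: Fix an integer $M\ge1$, weights $w_1,\dots,w_M>0$, constants $b_1,\dots,b_M>0$, and $\epsilon>0$. For $\mathbf r\in(0,\infty)^M$ write $S(\mathbf r)=\sum_{i=1}^M r_i$ and define $$\bar\Delta(\mathbf r)=\sum_{l=1}^M \frac{w_l e^{-r_l\epsilon}}{r_l}\, e^{\epsilon S(\mathbf r)}\big(1+S(\mathbf r)\big)+\sum_{l=1}^M w_l,\qquad \sigma_l(\mathbf r)=\frac{(1-e^{-r_l\epsilon})S(\mathbf r)+r_le^{-r_l\epsilon}}{S(\mathbf r)+1}.$$ Problem 1: minimize $\bar\Delta(\mathbf r)$ over $\mathbf r\in(0,\infty)^M$ subject to $\sigma_l(\mathbf r)\le b_l$ for all $l$; its optimal (infimum) value is $\bar\Delta_{\mathrm{opt}}(\epsilon)$. Energy-scarce solution (when $B:=\sum_i b_i<1$): for each $l$ let $$c_l=\frac{2b_l(1-B)^2}{b_l(1-B)^2+\sqrt{b_l^2(1-B)^4+4b_l^2(1-B)^2(B-b_l)\epsilon}},$$ let $x^\star=\frac{\min_l c_l}{1-B}$, $\beta^\star=\sum_{i=1}^M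 \frac{1}{\sqrt{w_i}}$, and set $r^\star_l=\min\{b_l,\beta^\star\sqrt{w_l}\}\,x^\star$. *)

theory Defs
  imports "HOL-Analysis.Analysis"
begin

text \<open>Indices are 0..M-1 (i.e. the set {..<M}); vectors r are functions nat => real,
  only their values on {..<M} matter.\<close>

definition Ssum :: "nat \<Rightarrow> (nat \<Rightarrow> real) \<Rightarrow> real" where
  "Ssum M r = (\<Sum>i<M. r i)"

definition Delta_bar :: "nat \<Rightarrow> (nat \<Rightarrow> real) \<Rightarrow> real \<Rightarrow> (nat \<Rightarrow> real) \<Rightarrow> real" where
  "Delta_bar M w eps r =
     (\<Sum>l<M. w l * exp (- r l * eps) / r l * exp (eps * Ssum M r) * (1 + Ssum M r))
     + (\<Sum>l<M. w l)"

definition sigma :: "nat \<Rightarrow> real \<Rightarrow> (nat \<Rightarrow> real) \<Rightarrow> nat \<Rightarrow> real" where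
  "sigma M eps r l =
     ((1 - exp (- r l * eps)) * Ssum M r + r l * exp (- r l * eps)) / (Ssum M r + 1)"

definition feasible :: "nat \<Rightarrow> (nat \<Rightarrow> real) \<Rightarrow> real \<Rightarrow> (nat \<Rightarrow> real) \<Rightarrow> bool" where
  "feasible M b eps r \<longleftrightarrow> (\<forall>l<M. 0 < r l \<and> sigma M eps r l \<le> b l)"

definition Delta_opt :: "nat \<Rightarrow> (nat \<Rightarrow> real) \<Rightarrow> (nat \<Rightarrow> real) \<Rightarrow> real \<Rightarrow> real" where
  "Delta_opt M w b eps = Inf (Delta_bar M w eps ` {r. feasible M b eps r})"

definition c_coef :: "nat \<Rightarrow> (nat \<Rightarrow> real) \<Rightarrow> real \<Rightarrow> nat \<Rightarrow> real" where
  "c_coef M b eps l =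
     (let B = (\<Sum>i<M. b i) in
      2 * b l * (1 - B)^2 /
      (b l * (1 - B)^2 + sqrt ((b l)^2 * (1 - B)^4 + 4 * (b l)^2 * (1 - B)^2 * (B - b l) * eps)))"

definition r_star :: "nat \<Rightarrow> (nat \<Rightarrow> real) \<Rightarrow> (nat \<Rightarrow> real) \<Rightarrow> real \<Rightarrow> nat \<Rightarrow> real" where
  "r_star M w b eps l =
     (let B = (\<Sum>i<M. b i);
          x = Min (c_coef M b eps ` {..<M}) / (1 - B);
          beta = (\<Sum>i<M. 1 / sqrt (w i))
      in min (b l) (beta * sqrt (w l)) * x)"

end

theory Submission
  imports Defs
begin

lemma tendsto_Min_img:
  fixes f :: "'i \<Rightarrow> 'a \<Rightarrow> real"
  assumes "finite A" "A \<noteq> {}" "\<And>i. i \<in> A \<Longrightarrow> ((\<lambda>x. f i x) \<longlongrightarrow> l i) F"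
  shows "((\<lambda>x. Min ((\<lambda>i. f i x) ` A)) \<longlongrightarrow> Min (l ` A)) F"
  using assms
proof (induction A rule: finite_ne_induct)
  case (singleton x) then show ?case by simp
next
  case (insert x A)
  then show ?case by (simp add: Min_insert tendsto_min)
qed

lemma Delta_cont:
  assumes "\<And>l. l < M \<Longrightarrow> ((\<lambda>e. r e l) \<longlongrightarrow> \<rho> l) (at 0)"
    and "\<And>l. l < M \<Longrightarrow> \<rho> l \<noteq> 0"
  shows "((\<lambda>e. Delta_bar M w e (r e)) \<longlongrightarrow> Delta_bar M w 0 \<rho>) (at 0)"
  unfolding Delta_bar_def Ssum_def
  by (intro tendsto_intros tendsto_sum) (auto intro!: assms tendsto_intros)

lemma Delta_val:
  fixes M :: nat and w b :: "nat \<Rightarrow> real"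
  assumes "\<forall>i<M. b i > 0" "(\<Sum>i<M. b i) < 1"
  shows "Delta_bar M w 0 (\<lambda>l. b l / (1 - (\<Sum>i<M. b i))) = (\<Sum>i<M. w i / b i + w i)"
proof -
  define B where "B = (\<Sum>i<M. b i)"
  have B1: "1 - B > 0" using assms B_def by simp
  have S: "Ssum M (\<lambda>l. b l / (1 - B)) = B / (1 - B)"
    unfolding Ssum_def B_def by (simp add: sum_divide_distrib)
  have "1 + B/(1-B) = 1/(1-B)" using B1 by (simp add: field_simps)
  have eq: "\<And>l. l<M \<Longrightarrow> w l / (b l / (1 - B)) * (1 + B/(1-B)) = w l / b l"
  proof -
    fix l assume "l < M"
    then have bl: "b l > 0" using assms(1) by simp
    have "w l / (b l / (1 - B)) * (1 + B/(1-B)) = w l / (b l / (1 - B)) * (1/(1-B))"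
      using \<open>1 + B/(1-B) = 1/(1-B)\<close> by simp
    also have "\<dots> = w l / b l" using B1 bl by (simp add: divide_simps)
    finally show "w l / (b l / (1 - B)) * (1 + B/(1-B)) = w l / b l" .
  qed
  show ?thesis unfolding Delta_bar_def S B_def[symmetric]
    using eq by (simp add: sum.distrib del: times_divide_eq_left divide_divide_eq_right)
qed

lemma lower_bound:
  fixes M :: nat and w b r :: "nat \<Rightarrow> real"
  assumes "\<forall>i<M. w i > 0" "\<forall>i<M. b i > 0" "eps \<ge> 0" "feasible M b eps r"
  shows "(\<Sum>i<M. w i / b i + w i) \<le> Delta_bar M w eps r"
proof -
  define S where "S = Ssum M r"
  have rpos: "\<And>l. l < M \<Longrightarrow> r l > 0" and sig: "\<And>l. l < M \<Longrightarrow> sigma M eps r l \<le> b l"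
    using assms(4) unfolding feasible_def by auto
  have Sge: "\<And>l. l < M \<Longrightarrow> r l \<le> S"
    unfolding S_def Ssum_def using rpos
    by (intro member_le_sum) (auto simp: less_imp_le)
  have key: "w l / b l \<le> w l * exp (- r l * eps) / r l * exp (eps * S) * (1 + S)" if l: "l < M" for l
  proof -
    have rl: "r l > 0" using rpos l .
    have bl: "b l > 0" "w l > 0" using assms l by auto
    have S0: "S + 1 > 0" using Sge[OF l] rl by simp
    have e1: "exp (- r l * eps) \<le> 1" using rl assms(3) by simp
    have num: "r l \<le> (1 - exp (- r l * eps)) * S + r l * exp (- r l * eps)"
    proof -
      have "0 \<le> (1 - exp (- r l * eps)) * (S - r l)" using e1 Sge[OF l] by simp
      then show ?thesis by (simp add: algebra_simps)
    qed
    have "(1 - exp (- r l * eps)) * S + r l * exp (- r l * eps) \<le> b l * (S + 1)"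
      using sig[OF l] S0 unfolding sigma_def S_def[symmetric] by (simp add: divide_le_eq)
    with num have rb: "r l \<le> b l * (1 + S)" by (simp add: add.commute)
    have ex: "exp (- r l * eps) * exp (eps * S) \<ge> 1"
    proof -
      have "exp (- r l * eps) * exp (eps * S) = exp (eps * (S - r l))"
        by (simp add: exp_add[symmetric] algebra_simps)
      also have "\<dots> \<ge> 1" using assms(3) Sge[OF l] by simp
      finally show ?thesis .
    qed
    have "w l / b l \<le> w l * (1 + S) / r l"
      using rb rl bl S0 by (simp add: divide_simps) (simp add: mult_left_mono algebra_simps)
    also have "\<dots> \<le> w l * (1 + S) / r l * (exp (- r l * eps) * exp (eps * S))"
      proof -
      have "w l * (1 + S) / r l \<ge> 0" using rl bl S0 by (simp add: add.commute)
      then show ?thesis using ex mult_left_mono[OF ex, of "w l * (1 + S) / r l"] by (simp only: mult_1_right)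
    qed
    also have "\<dots> = w l * exp (- r l * eps) / r l * exp (eps * S) * (1 + S)" by simp
    finally show ?thesis .
  qed
  show ?thesis unfolding Delta_bar_def S_def[symmetric] sum.distrib
    using key by (intro add_mono sum_mono) auto
qed

lemma feasible_fam:
  fixes M :: nat and b :: "nat \<Rightarrow> real"
  assumes "\<forall>i<M. b i > 0" "(\<Sum>i<M. b i) < 1" "eps \<ge> 0"
  defines "B \<equiv> (\<Sum>i<M. b i)"
  shows "feasible M b eps (\<lambda>l. b l / (1 - B + eps * (B / (1 - B))))"
proof -
  define K where "K = B / (1 - B)"
  define s where "s = 1 / (1 - B + eps * K)"
  have B1: "1 - B > 0" using assms B_def by simp
  have B0: "B \<ge> 0" unfolding B_def using assms(1) by (intro sum_nonneg) (auto simp: less_imp_le)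
  have K0: "K \<ge> 0" using B0 B1 K_def by simp
  have den: "1 - B + eps * K > 0" using B1 K0 assms(3) by (simp add: add_pos_nonneg)
  have s0: "s > 0" using den s_def by simp
  have s1: "s * (1 - B + eps * K) = 1" using den s_def by simp
  have sle: "s \<le> 1 / (1 - B)" unfolding s_def using den B1 K0 assms(3)
    by (intro divide_left_mono) auto
  have sB: "s * B \<le> K" unfolding K_def using sle B0 B1
    by (metis divide_right_mono mult.commute times_divide_eq_right mult_left_mono mult_1_right)
  have r_eq: "(\<lambda>l. b l / (1 - B + eps * (B / (1 - B)))) = (\<lambda>l. b l * s)"
    unfolding s_def K_def by simp
  have S: "Ssum M (\<lambda>l. b l * s) = s * B" unfolding Ssum_def B_def by (simp add: sum_distrib_left mult.commute)
  have main: "sigma M eps (\<lambda>l. b l * s) l \<le> b l" if l: "l < M" for l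
  proof -
    have bl: "b l > 0" using assms l by auto
    have rS: "b l * s \<le> s * B" unfolding B_def using assms(1) l s0
      by (simp add: mult.commute, intro mult_left_mono member_le_sum) (auto simp: less_imp_le)
    define x where "x = b l * s * eps"
    have x0: "x \<ge> 0" using x_def bl s0 assms(3) by simp
    have ex: "1 - exp (- x) \<le> x" using exp_ge_add_one_self[of "-x"] by simp
    have num: "(1 - exp (- x)) * (s * B) + b l * s * exp (- x) \<le> b l * s + b l * s * eps * (s * B)"
    proof -
      have "(1 - exp (- x)) * (s * B) + b l * s * exp (- x) = b l * s + (1 - exp (- x)) * (s * B - b l * s)"
        by (simp add: algebra_simps)
      also have "\<dots> \<le> b l * s + x * (s * B - b l * s)"
        using ex rS by (intro add_left_mono mult_right_mono) auto
      also have "\<dots> \<le> b l * s + x * (s * B)" using x0 bl s0 by (intro add_left_mono mult_left_mono) auto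
      finally show ?thesis unfolding x_def .
    qed
    have "b l * s + b l * s * eps * (s * B) = b l * (s * (1 - B) + eps * s * (s * B)) + b l * (s * B)"
      by (simp add: algebra_simps)
    also have "\<dots> \<le> b l * (s * (1 - B) + eps * s * K) + b l * (s * B)"
      using sB bl s0 assms(3) by (intro add_right_mono mult_left_mono add_left_mono) auto
    also have "\<dots> = b l * (s * B + 1)" using s1 by (simp add: algebra_simps)
    finally have "(1 - exp (- x)) * (s * B) + b l * s * exp (- x) \<le> b l * (s * B + 1)" using num by linarith
    moreover have "s * B + 1 > 0" using s0 B0 by (simp add: add_nonneg_pos)
    ultimately show ?thesis unfolding sigma_def S x_def
      by (simp add: divide_le_eq mult.commute mult.left_commute)
  qed
  show ?thesis unfolding r_eq feasible_def using main s0 assms(1) by auto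
qed

lemma c_lim:
  fixes M :: nat and b :: "nat \<Rightarrow> real"
  assumes "\<forall>i<M. b i > 0" "(\<Sum>i<M. b i) < 1" "l < M"
  shows "((\<lambda>e. c_coef M b e l) \<longlongrightarrow> 1) (at 0)"
proof -
  define B where "B = (\<Sum>i<M. b i)"
  have B1: "1 - B > 0" using assms B_def by simp
  have bl: "b l > 0" using assms by auto
  have p: "b l * (1 - B)^2 > 0" using B1 bl by simp
  have sq: "sqrt ((b l)^2 * (1 - B)^4) = b l * (1 - B)^2"
  proof -
    have "(b l)^2 * (1 - B)^4 = (b l * (1 - B)^2)^2" by (simp add: power_mult_distrib power_mult[symmetric])
    then show ?thesis using p by simp
  qed
  have "((\<lambda>e. 2 * b l * (1 - B)^2 /
      (b l * (1 - B)^2 + sqrt ((b l)^2 * (1 - B)^4 + 4 * (b l)^2 * (1 - B)^2 * (B - b l) * e)))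
     \<longlongrightarrow> 2 * b l * (1 - B)^2 /
      (b l * (1 - B)^2 + sqrt ((b l)^2 * (1 - B)^4 + 4 * (b l)^2 * (1 - B)^2 * (B - b l) * 0))) (at 0)"
    using p sq by (intro tendsto_intros) auto
  also have "2 * b l * (1 - B)^2 /
      (b l * (1 - B)^2 + sqrt ((b l)^2 * (1 - B)^4 + 4 * (b l)^2 * (1 - B)^2 * (B - b l) * 0)) = 1"
    using sq p bl B1 by simp
  finally show ?thesis unfolding c_coef_def B_def Let_def .
qed

lemma rstar_lim:
  fixes M :: nat and w b :: "nat \<Rightarrow> real"
  assumes "M \<ge> 1" "\<forall>i<M. w i > 0" "\<forall>i<M. b i > 0" "(\<Sum>i<M. b i) < 1" "l < M"
  shows "((\<lambda>e. r_star M w b e l) \<longlongrightarrow> b l / (1 - (\<Sum>i<M. b i))) (at 0)"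
proof -
  define B where "B = (\<Sum>i<M. b i)"
  define beta where "beta = (\<Sum>i<M. 1 / sqrt (w i))"
  have B1: "1 - B > 0" using assms B_def by simp
  have ne: "{..<M} \<noteq> {}" using assms(1) by (auto simp: lessThan_empty_iff)
  have "((\<lambda>e. Min ((\<lambda>i. c_coef M b e i) ` {..<M})) \<longlongrightarrow> Min ((\<lambda>i. 1::real) ` {..<M})) (at 0)"
    using ne c_lim[OF assms(3,4)] by (intro tendsto_Min_img) auto
  also have "Min ((\<lambda>i. 1::real) ` {..<M}) = 1" using ne by simp
  finally have mn: "((\<lambda>e. Min ((\<lambda>i. c_coef M b e i) ` {..<M})) \<longlongrightarrow> 1) (at 0)" .
  have bl: "b l > 0" "w l > 0" using assms by auto
  have blB: "b l \<le> B" unfolding B_def using assms(3,5)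
    by (intro member_le_sum) (auto simp: less_imp_le)
  have "1 / sqrt (w l) \<le> beta" unfolding beta_def using assms(2,5)
    by (intro member_le_sum) auto
  then have "1 \<le> beta * sqrt (w l)" using bl by (simp add: divide_le_eq)
  then have mn2: "min (b l) (beta * sqrt (w l)) = b l" using blB B1 by simp
  have "((\<lambda>e. min (b l) (beta * sqrt (w l)) * (Min ((\<lambda>i. c_coef M b e i) ` {..<M}) / (1 - B)))
      \<longlongrightarrow> min (b l) (beta * sqrt (w l)) * (1 / (1 - B))) (at 0)"
    using B1 by (intro tendsto_intros mn) auto
  then show ?thesis unfolding r_star_def Let_def B_def[symmetric] beta_def[symmetric] mn2 by simp
qed

theorem corollary2:
  fixes M :: nat and w b :: "nat \<Rightarrow> real"
  assumes "M \<ge> 1"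
    and "\<forall>i<M. w i > 0"
    and "\<forall>i<M. b i > 0"
    and "(\<Sum>i<M. b i) < 1"
  shows "(((\<lambda>eps. \<bar>Delta_bar M w eps (r_star M w b eps) - Delta_opt M w b eps\<bar>)
            \<longlongrightarrow> 0) (at_right 0))
         \<and> ((\<lambda>eps. Delta_opt M w b eps) \<longlongrightarrow> (\<Sum>i<M. w i / b i + w i)) (at_right 0)"
proof -
  define B where "B = (\<Sum>i<M. b i)"
  define L where "L = (\<Sum>i<M. w i / b i + w i)"
  define fam where "fam = (\<lambda>e::real. \<lambda>l. b l / (1 - B + e * (B / (1 - B))))"
  have B1: "1 - B > 0" using assms B_def by simp
  have rho0: "\<And>l. l < M \<Longrightarrow> b l / (1 - B) \<noteq> 0" using B1 assms(3) by auto
  have T1: "((\<lambda>e. Delta_bar M w e (r_star M w b e)) \<longlongrightarrow> L) (at 0)"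
  proof -
    have "((\<lambda>e. Delta_bar M w e (r_star M w b e)) \<longlongrightarrow> Delta_bar M w 0 (\<lambda>l. b l / (1 - B))) (at 0)"
      using rstar_lim[OF assms] rho0 unfolding B_def by (intro Delta_cont) auto
    then show ?thesis using Delta_val[OF assms(3,4)] unfolding L_def B_def by simp
  qed
  have T2: "((\<lambda>e. Delta_bar M w e (fam e)) \<longlongrightarrow> L) (at 0)"
  proof -
    have "((\<lambda>e. fam e l) \<longlongrightarrow> b l / (1 - B)) (at 0)" for l
    proof -
      have "((\<lambda>e. fam e l) \<longlongrightarrow> b l / (1 - B + 0 * (B / (1 - B)))) (at 0)"
        unfolding fam_def using B1 by (intro tendsto_intros) auto
      then show ?thesis by simp
    qed
    then have "((\<lambda>e. Delta_bar M w e (fam e)) \<longlongrightarrow> Delta_bar M w 0 (\<lambda>l. b l / (1 - B))) (at 0)"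
      using rho0 by (intro Delta_cont) auto
    then show ?thesis using Delta_val[OF assms(3,4)] unfolding L_def B_def by simp
  qed
  have atr: "at_right (0::real) \<le> at 0" by (simp add: at_le)
  have bounds: "L \<le> Delta_opt M w b e \<and> Delta_opt M w b e \<le> Delta_bar M w e (fam e)" if e: "e > 0" for e
  proof -
    have fe: "feasible M b e (fam e)" unfolding fam_def B_def
      using feasible_fam[OF assms(3,4)] e by simp
    have lb: "\<And>r. feasible M b e r \<Longrightarrow> L \<le> Delta_bar M w e r"
      unfolding L_def using lower_bound[OF assms(2,3)] e by simp
    have bdd: "bdd_below (Delta_bar M w e ` {r. feasible M b e r})"
      using lb by (auto intro!: bdd_belowI)
    show ?thesis unfolding Delta_opt_def
    proof
      show "L \<le> Inf (Delta_bar M w e ` {r. feasible M b e r})"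
        using fe lb by (intro cInf_greatest) auto
      show "Inf (Delta_bar M w e ` {r. feasible M b e r}) \<le> Delta_bar M w e (fam e)"
        using fe bdd by (intro cInf_lower) auto
    qed
  qed
  have Opt: "((\<lambda>e. Delta_opt M w b e) \<longlongrightarrow> L) (at_right 0)"
  proof (rule tendsto_sandwich[where f="\<lambda>_. L" and h="\<lambda>e. Delta_bar M w e (fam e)"])
    show "\<forall>\<^sub>F e in at_right 0. L \<le> Delta_opt M w b e"
      using bounds eventually_at_right_less[of 0] by (auto elim!: eventually_mono)
    show "\<forall>\<^sub>F e in at_right 0. Delta_opt M w b e \<le> Delta_bar M w e (fam e)"
      using bounds eventually_at_right_less[of 0] by (auto elim!: eventually_mono)
    show "((\<lambda>_. L) \<longlongrightarrow> L) (at_right 0)" by simp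
    show "((\<lambda>e. Delta_bar M w e (fam e)) \<longlongrightarrow> L) (at_right 0)"
      using tendsto_mono[OF atr T2] .
  qed
  have "((\<lambda>e. \<bar>Delta_bar M w e (r_star M w b e) - Delta_opt M w b e\<bar>) \<longlongrightarrow> \<bar>L - L\<bar>) (at_right 0)"
    using tendsto_mono[OF atr T1] Opt by (intro tendsto_intros)
  then show ?thesis using Opt unfolding L_def by simp
qed

end
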